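(* Let $\mathbb{K}$ be a field and let $P_1, P_2 \in \mathbb{K}[X]$ be irreducible. If there exists a ring isomorphism $f : \mathbb{K}[X]/(P_1) \to \mathbb{K}[X]/(P_2)$ stabilizing $\mathbb{K}$ such that $Q_f' \neq 0$, then the rings $\mathbb{K}[X]/(P_1^n)$ and $\mathbb{K}[X]/(P_2^n)$ are isomorphic for all $n \geq 1$.
   Context: A ring homomorphism $f : A \to B$ between $\mathbb{K}$-algebras stabilizes $\mathbb{K}$ if there is a field automorphism $\sigma_f$ of $\mathbb{K}$ with $f(a) = \sigma_f(a)$ for all $a \in \mathbb{K}$. For a ring isomorphism $f : \mathbb{K}[X]/(P_1) \to \mathbb{K}[X]/(P_2)$ stabilizing $\mathbb{K}$, $Q_f$ is the unique polynomial of degree $< \deg P_2$ such that $f$ sends the class of $X$ to the class of $Q_f$; $'$ denotes the formal derivative. *)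

theory Defs
  imports "HOL-Computational_Algebra.Polynomial" "HOL-Algebra.QuotRing"
begin

definition poly_ring :: "'a::comm_ring_1 poly ring" where
  "poly_ring = \<lparr>carrier = UNIV, monoid.mult = (*), one = 1, zero = 0, add = (+)\<rparr>"

definition quot_poly :: "'a::comm_ring_1 poly \<Rightarrow> 'a poly set ring" where
  "quot_poly P = poly_ring Quot (PIdl\<^bsub>poly_ring\<^esub> P)"

definition pclass :: "'a::comm_ring_1 poly \<Rightarrow> 'a poly \<Rightarrow> 'a poly set" where
  "pclass P q = (PIdl\<^bsub>poly_ring\<^esub> P) +>\<^bsub>poly_ring\<^esub> q"

definition field_automorphism :: "('a::field \<Rightarrow> 'a) \<Rightarrow> bool" where
  "field_automorphism \<sigma> \<longleftrightarrow> bij \<sigma> \<and> (\<forall>a b. \<sigma> (a + b) = \<sigma> a + \<sigma> b)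
     \<and> (\<forall>a b. \<sigma> (a * b) = \<sigma> a * \<sigma> b) \<and> \<sigma> 1 = 1"

definition stabilizes_K ::
  "'a::field poly \<Rightarrow> 'a poly \<Rightarrow> ('a poly set \<Rightarrow> 'a poly set) \<Rightarrow> bool" where
  "stabilizes_K P1 P2 f \<longleftrightarrow> (\<exists>\<sigma>. field_automorphism \<sigma> \<and>
      (\<forall>a. f (pclass P1 [:a:]) = pclass P2 [:\<sigma> a:]))"

definition Q_f :: "'a::field poly \<Rightarrow> 'a poly \<Rightarrow> ('a poly set \<Rightarrow> 'a poly set) \<Rightarrow> 'a poly" where
  "Q_f P1 P2 f = (THE Q. degree Q < degree P2 \<and> f (pclass P1 [:0, 1:]) = pclass P2 Q)"

end

theory Submission
  imports Defs "HOL-Computational_Algebra.Polynomial_Factorial"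
begin

lemma poly_ring_simps [simp]:
  "carrier poly_ring = UNIV" "mult poly_ring = (*)" "add poly_ring = (+)"
  "one poly_ring = 1" "zero poly_ring = 0"
  by (simp_all add: poly_ring_def)

lemma cring_poly_ring: "cring (poly_ring :: 'a::comm_ring_1 poly ring)"
proof (rule cringI)
  show "abelian_group (poly_ring :: 'a poly ring)"
  proof (rule abelian_groupI)
    fix x :: "'a poly"
    show "\<exists>y\<in>carrier poly_ring. y \<oplus>\<^bsub>poly_ring\<^esub> x = \<zero>\<^bsub>poly_ring\<^esub>"
      by (rule bexI[of _ "- x"]) simp_all
  qed (simp_all add: algebra_simps)
  show "Group.comm_monoid (poly_ring :: 'a poly ring)"
    by (rule comm_monoidI) (simp_all add: algebra_simps)
qed (simp_all add: algebra_simps)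

lemma PIdl_poly: "PIdl\<^bsub>poly_ring\<^esub> (P::'a::comm_ring_1 poly) = {x * P | x. True}"
  by (simp add: cgenideal_def)

lemma ideal_PIdl_poly: "ideal (PIdl\<^bsub>poly_ring\<^esub> (P::'a::comm_ring_1 poly)) poly_ring"
  using cring.cgenideal_ideal[OF cring_poly_ring] by simp

lemma pclass_eq: "pclass P q = {x. P dvd x - q}"
proof -
  have "x \<in> pclass P q \<longleftrightarrow> (\<exists>y. x = y * P + q)" for x
    unfolding pclass_def PIdl_poly a_r_coset_def r_coset_def by auto
  moreover have "(\<exists>y. x = y * P + q) \<longleftrightarrow> P dvd x - q" for x
  proof
    assume "\<exists>y. x = y * P + q"
    then obtain y where "x = y * P + q" by blast
    then have "x - q = P * y" by (simp add: algebra_simps)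
    then show "P dvd x - q" by (rule dvdI)
  next
    assume "P dvd x - q"
    then obtain y where "x - q = P * y" by (rule dvdE)
    then have "x = y * P + q" by (simp add: algebra_simps)
    then show "\<exists>y. x = y * P + q" by blast
  qed
  ultimately show ?thesis by auto
qed

lemma pclass_eq_iff: "pclass P a = pclass P b \<longleftrightarrow> P dvd a - b"
proof
  assume "pclass P a = pclass P b"
  moreover have "a \<in> pclass P a" by (simp add: pclass_eq)
  ultimately have "a \<in> pclass P b" by simp
  then show "P dvd a - b" by (simp add: pclass_eq)
next
  assume h: "P dvd a - b"
  have "P dvd x - a \<longleftrightarrow> P dvd x - b" for x
  proof -
    have "x - b = (x - a) + (a - b)" by simp
    moreover have "x - a = (x - b) - (a - b)" by simp
    ultimately show ?thesis using h by (metis dvd_add dvd_diff)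
  qed
  then show "pclass P a = pclass P b" unfolding pclass_eq by auto
qed

lemma quot_carrier: "carrier (quot_poly P) = range (pclass P)"
  unfolding quot_poly_def FactRing_def A_RCOSETS_def' pclass_def by auto

lemma quot_add: "pclass P a \<oplus>\<^bsub>quot_poly P\<^esub> pclass P b = pclass P (a + b)"
  using ideal.a_rcos_sum[OF ideal_PIdl_poly[of P], of a b]
  unfolding quot_poly_def FactRing_def pclass_def by simp

lemma quot_mult: "pclass P a \<otimes>\<^bsub>quot_poly P\<^esub> pclass P b = pclass P (a * b)"
  using ideal.rcoset_mult_add[OF ideal_PIdl_poly[of P], of a b]
  unfolding quot_poly_def FactRing_def pclass_def by simp

lemma quot_zero: "\<zero>\<^bsub>quot_poly P\<^esub> = pclass P 0"
proof -
  have "pclass P 0 = PIdl\<^bsub>poly_ring\<^esub> P"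
    unfolding pclass_eq PIdl_poly by (auto simp: dvd_def mult.commute)
  then show ?thesis unfolding quot_poly_def FactRing_def by simp
qed

lemma quot_one: "\<one>\<^bsub>quot_poly P\<^esub> = pclass P 1"
  unfolding quot_poly_def FactRing_def pclass_def by simp

definition phi :: "('a::field \<Rightarrow> 'a) \<Rightarrow> 'a poly \<Rightarrow> 'a poly \<Rightarrow> 'a poly" where
  "phi \<sigma> Q A = pcompose (map_poly \<sigma> A) Q"

lemma taylor2:
  fixes p H :: "'a::idom poly"
  shows "H^2 dvd pcompose p ([:0,1:] + H) - p - pderiv p * H"
proof (induction p)
  case 0
  then show ?case by simp
next
  case (pCons a p)
  then obtain s where s: "pcompose p ([:0,1:] + H) - p - pderiv p * H = H^2 * s"
    by (auto simp: dvd_def)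
  define X :: "'a poly" where "X = [:0,1:]"
  define c where "c = pcompose p (X + H)"
  have c: "c = p + pderiv p * H + H^2 * s" using s unfolding c_def X_def by (simp add: algebra_simps)
  define L where "L = pcompose (pCons a p) (X + H)"
  define P0 where "P0 = pCons a p"
  define D where "D = pderiv (pCons a p)"
  have P0: "P0 = [:a:] + X * p" unfolding X_def P0_def by simp
  have D: "D = p + X * pderiv p" unfolding X_def D_def pderiv_pCons by simp
  have L: "L = [:a:] + (X + H) * c"
    unfolding c_def L_def by (simp add: pcompose_pCons)
  have "L - P0 - D * H = H^2 * (X * s + pderiv p + H * s)"
    unfolding L P0 D c by (simp add: algebra_simps power2_eq_square)
  then show ?case unfolding X_def L_def P0_def D_def by (metis dvd_triv_left)
qed

context
  fixes \<sigma> :: "'a::field \<Rightarrow> 'a"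
  assumes fa: "field_automorphism \<sigma>"
begin

lemma s_add: "\<sigma> (a + b) = \<sigma> a + \<sigma> b" and s_mult: "\<sigma> (a * b) = \<sigma> a * \<sigma> b"
  and s_one: "\<sigma> 1 = 1" and s_bij: "bij \<sigma>"
  using fa by (auto simp: field_automorphism_def)

lemma s_zero: "\<sigma> 0 = 0"
proof -
  have "\<sigma> 0 + 0 = \<sigma> 0 + \<sigma> 0" using s_add[of 0 0] by simp
  then show ?thesis by (rule add_left_imp_eq[symmetric])
qed

lemma s_of_nat: "\<sigma> (of_nat n) = of_nat n"
  by (induction n) (simp_all add: s_zero s_add s_one)

lemma inv_s_zero: "inv_into UNIV \<sigma> 0 = 0"
  using s_bij s_zero by (metis bij_def inv_f_f)

lemma s_inv: "\<sigma> (inv_into UNIV \<sigma> x) = x"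
  using s_bij by (simp add: bij_def surj_f_inv_f)

lemma mp_add: "map_poly \<sigma> (p + q) = map_poly \<sigma> p + map_poly \<sigma> q"
  by (intro poly_eqI) (simp add: coeff_map_poly s_zero s_add)

lemma mp_smult: "map_poly \<sigma> (smult c p) = smult (\<sigma> c) (map_poly \<sigma> p)"
  by (rule map_poly_smult) (simp_all add: s_zero s_mult)

lemma mp_mult: "map_poly \<sigma> (p * q) = map_poly \<sigma> p * map_poly \<sigma> q"
  by (induction p) (simp_all add: map_poly_pCons s_zero mp_add mp_smult)

lemma mp_const: "map_poly \<sigma> [:a:] = [:\<sigma> a:]"
  by (simp add: map_poly_pCons s_zero)

lemma mp_X: "map_poly \<sigma> [:0,1:] = [:0,1:]"
  by (simp add: map_poly_pCons s_zero s_one)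

lemma mp_pcompose: "map_poly \<sigma> (pcompose p q) = pcompose (map_poly \<sigma> p) (map_poly \<sigma> q)"
  by (induction p) (simp_all add: map_poly_pCons s_zero mp_add mp_mult mp_const pcompose_pCons)

lemma mp_pderiv: "map_poly \<sigma> (pderiv p) = pderiv (map_poly \<sigma> p)"
  by (intro poly_eqI) (simp add: coeff_map_poly s_zero coeff_pderiv s_mult s_of_nat del: of_nat_Suc)

lemma mp_inv: "map_poly \<sigma> (map_poly (inv_into UNIV \<sigma>) p) = p"
  by (simp add: map_poly_map_poly s_zero inv_s_zero o_def s_inv)

lemma phi_add: "phi \<sigma> Q (A + B) = phi \<sigma> Q A + phi \<sigma> Q B"
  by (simp add: phi_def mp_add pcompose_add)

lemma phi_mult: "phi \<sigma> Q (A * B) = phi \<sigma> Q A * phi \<sigma> Q B"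
  by (simp add: phi_def mp_mult pcompose_mult)

lemma phi_diff: "phi \<sigma> Q (A - B) = phi \<sigma> Q A - phi \<sigma> Q B"
  using phi_add[of Q "A - B" B] by simp

lemma phi_power: "phi \<sigma> Q (A ^ k) = phi \<sigma> Q A ^ k"
  by (induction k) (simp_all add: phi_mult, simp add: phi_def s_one pcompose_1)

lemma phi_const: "phi \<sigma> Q [:a:] = [:\<sigma> a:]"
  by (simp add: phi_def mp_const)

lemma phi_X: "phi \<sigma> Q [:0,1:] = Q"
  by (simp add: phi_def mp_X pcompose_pCons)

lemma phi_pcompose: "phi \<sigma> Q (pcompose B A) = pcompose (map_poly \<sigma> B) (phi \<sigma> Q A)"
  by (simp add: phi_def mp_pcompose pcompose_assoc)

lemma phi_pderiv: "pderiv (phi \<sigma> Q A) = phi \<sigma> Q (pderiv A) * pderiv Q"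
  by (simp add: phi_def pderiv_pcompose mp_pderiv)

end

lemma sq_dvd_pderiv:
  fixes P F :: "'a::idom poly"
  assumes "P^2 dvd F" shows "P dvd pderiv F"
proof -
  obtain S where "F = P * (P * S)" using assms by (auto simp: power2_eq_square dvd_def mult.assoc)
  then have "pderiv F = P * (pderiv (P * S) + S * pderiv P)"
    by (simp add: pderiv_mult algebra_simps)
  then show ?thesis by simp
qed

lemma prime_P: "irreducible (P :: 'a::field poly) \<Longrightarrow> prime_elem P"
  by (rule field_poly_irreducible_imp_prime)

lemma core:
  fixes P1 P2 Q :: "'a::field poly"
  assumes fa: "field_automorphism \<sigma>"
    and irr1: "irreducible P1" and irr2: "irreducible P2"
    and inj: "\<And>A. P2 dvd phi \<sigma> Q A \<Longrightarrow> P1 dvd A"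
    and surj: "\<And>C. \<exists>A. P2 dvd C - phi \<sigma> Q A"
    and dQ: "\<not> P2 dvd pderiv Q"
  shows "\<not> P2^2 dvd phi \<sigma> Q P1"
proof
  assume h: "P2^2 dvd phi \<sigma> Q P1"
  let ?X = "[:0,1:] :: 'a poly"
  have pr2: "prime_elem P2" using irr2 by (rule prime_P)
  have P2nz: "P2 \<noteq> 0" using irr2 by auto
  have step1: "P1 dvd pderiv P1"
  proof -
    have "P2 dvd pderiv (phi \<sigma> Q P1)" using h by (rule sq_dvd_pderiv)
    then have "P2 dvd phi \<sigma> Q (pderiv P1) * pderiv Q" by (simp add: phi_pderiv[OF fa])
    then have "P2 dvd phi \<sigma> Q (pderiv P1)" using pr2 dQ by (simp add: prime_elem_dvd_mult_iff)
    then show ?thesis by (rule inj)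
  qed
  obtain A where "P2 dvd ?X - phi \<sigma> Q A" using surj by blast
  then obtain W0 where "?X - phi \<sigma> Q A = P2 * W0" by (rule dvdE)
  then have phiA: "phi \<sigma> Q A = ?X + P2 * (- W0)" by (simp add: algebra_simps)
  define W where "W = - W0"
  have phiA: "phi \<sigma> Q A = ?X + P2 * W" using phiA W_def by simp
  have inv_comp: "phi \<sigma> Q (pcompose (map_poly (inv_into UNIV \<sigma>) R) A) = pcompose R (?X + P2 * W)" for R
    by (simp add: phi_pcompose[OF fa] mp_inv[OF fa] phiA)
  define E where "E = pcompose (map_poly (inv_into UNIV \<sigma>) P2) A"
  have tay2: "(P2 * W)^2 dvd pcompose P2 (?X + P2 * W) - P2 - pderiv P2 * (P2 * W)"
    by (rule taylor2)
  obtain T where T: "pcompose P2 (?X + P2 * W) - P2 - pderiv P2 * (P2 * W) = P2^2 * (W^2 * T)"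
    using tay2 by (auto simp: dvd_def power_mult_distrib mult.assoc)
  have phiE: "phi \<sigma> Q E = P2 * (1 + pderiv P2 * W + P2 * (W^2 * T))"
    unfolding E_def inv_comp using T by (simp add: algebra_simps power2_eq_square)
  then have "P1 dvd E" by (intro inj) simp
  then obtain E1 where "E = P1 * E1" by (rule dvdE)
  then have "phi \<sigma> Q P1 dvd phi \<sigma> Q E" by (simp add: phi_mult[OF fa])
  with h have "P2 * P2 dvd P2 * (1 + pderiv P2 * W + P2 * (W^2 * T))"
    unfolding phiE power2_eq_square using dvd_trans by blast
  then have "P2 dvd 1 + pderiv P2 * W + P2 * (W^2 * T)" using P2nz by simp
  then have s3: "P2 dvd 1 + pderiv P2 * W" by (metis dvd_add_left_iff dvd_triv_left add.assoc)
  have "pderiv (phi \<sigma> Q A) = 1 + pderiv P2 * W + P2 * pderiv W"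
    unfolding phiA by (simp add: pderiv_add pderiv_mult pderiv_pCons algebra_simps)
  then have "phi \<sigma> Q (pderiv A) * pderiv Q = (1 + pderiv P2 * W) + P2 * pderiv W"
    by (simp add: phi_pderiv[OF fa])
  then have "P2 dvd phi \<sigma> Q (pderiv A) * pderiv Q" using s3 by simp
  then have "P2 dvd phi \<sigma> Q (pderiv A)" using pr2 dQ by (simp add: prime_elem_dvd_mult_iff)
  then have s4: "P1 dvd pderiv A" by (rule inj)
  define B where "B = pcompose (map_poly (inv_into UNIV \<sigma>) Q) A"
  have tayQ: "(P2 * W)^2 dvd pcompose Q (?X + P2 * W) - Q - pderiv Q * (P2 * W)"
    by (rule taylor2)
  then have "P2 dvd pcompose Q (?X + P2 * W) - Q - pderiv Q * (P2 * W)"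
    by (rule dvd_trans[rotated]) (simp add: power2_eq_square)
  then have "P2 dvd pcompose Q (?X + P2 * W) - Q"
    by (metis diff_add_cancel dvd_add dvd_triv_left mult.left_commute)
  then have "P2 dvd phi \<sigma> Q (B - ?X)"
    unfolding B_def phi_diff[OF fa] inv_comp phi_X[OF fa] .
  then have "P1 dvd B - ?X" by (rule inj)
  then obtain V where V: "B - ?X = P1 * V" by (rule dvdE)
  have "pderiv B = pcompose (pderiv (map_poly (inv_into UNIV \<sigma>) Q)) A * pderiv A"
    unfolding B_def by (rule pderiv_pcompose)
  moreover have "pderiv B = 1 + P1 * pderiv V + V * pderiv P1"
  proof -
    have "B = ?X + P1 * V" using V by (simp add: algebra_simps)
    then show ?thesis by (simp add: pderiv_add pderiv_mult pderiv_pCons)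
  qed
  ultimately have "1 = pcompose (pderiv (map_poly (inv_into UNIV \<sigma>) Q)) A * pderiv A
      - P1 * pderiv V - V * pderiv P1" by (simp add: algebra_simps)
  moreover have "P1 dvd pcompose (pderiv (map_poly (inv_into UNIV \<sigma>) Q)) A * pderiv A
      - P1 * pderiv V - V * pderiv P1"
    using s4 step1 by (intro dvd_diff) auto
  ultimately have "P1 dvd 1" by simp
  then show False using irr1 by (simp add: irreducible_def)
qed

lemma pow_cancel:
  fixes p t :: "'a::idom poly"
  assumes pr: "prime_elem p" and nt: "\<not> p dvd t"
  shows "p^k dvd t * b \<Longrightarrow> p^k dvd b"
proof (induction k arbitrary: b)
  case 0
  then show ?case by simp
next
  case (Suc k)
  have "p dvd p^Suc k" by simp
  then have "p dvd t * b" using Suc.prems dvd_trans by blast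
  then have "p dvd b" using pr nt by (simp add: prime_elem_dvd_mult_iff)
  then obtain b1 where b1: "b = p * b1" by (rule dvdE)
  have pnz: "p \<noteq> 0" using pr by auto
  have "p * p^k dvd p * (t * b1)" using Suc.prems b1 by (simp add: algebra_simps)
  then have "p^k dvd t * b1" using pnz by simp
  then have "p^k dvd b1" by (rule Suc.IH)
  then show ?case using b1 by simp
qed

lemma dvd_pow_diff:
  fixes p x y :: "'a::comm_ring_1"
  assumes "p dvd x - y" shows "p dvd x^k - y^k"
proof (induction k)
  case 0
  then show ?case by simp
next
  case (Suc k)
  have "x^Suc k - y^Suc k = x * (x^k - y^k) + y^k * (x - y)" by (simp add: algebra_simps)
  then show ?case using Suc assms by simp
qed

lemma bezout_field_poly:
  fixes P T :: "'a::field poly"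
  assumes irr: "irreducible P" and nT: "\<not> P dvd T"
  shows "\<exists>V. P dvd T * V - 1"
proof -
  define S where "S = {g. g \<noteq> 0 \<and> (\<exists>x y. g = x * P + y * T)}"
  have Pnz: "P \<noteq> 0" using irr by auto
  have "P = 1 * P + 0 * T" by simp
  then have PS: "P \<in> S" unfolding S_def using Pnz by blast
  define n where "n = (LEAST n. \<exists>g\<in>S. degree g = n)"
  have "\<exists>g\<in>S. degree g = n" unfolding n_def
    by (rule LeastI[of "\<lambda>n. \<exists>g\<in>S. degree g = n" "degree P"]) (use PS in blast)
  then obtain g where gS: "g \<in> S" and gn: "degree g = n" by blast
  have gmin: "degree g \<le> degree g'" if "g' \<in> S" for g'
    unfolding gn n_def using that by (intro Least_le) blast
  obtain x y where xy: "x * P + y * T = g" using gS unfolding S_def by auto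
  have gnz: "g \<noteq> 0" using gS unfolding S_def by auto
  have gdvd: "g dvd x0 * P + y0 * T" for x0 y0
  proof (rule ccontr)
    define Z where "Z = x0 * P + y0 * T"
    assume "\<not> g dvd x0 * P + y0 * T"
    then have nz: "Z mod g \<noteq> 0" unfolding Z_def by (simp add: mod_eq_0_iff_dvd)
    have "Z mod g = Z - (Z div g) * g" by (simp add: minus_div_mult_eq_mod)
    also have "\<dots> = (x0 - Z div g * x) * P + (y0 - Z div g * y) * T"
      unfolding Z_def xy[symmetric] by (simp add: algebra_simps)
    finally have "Z mod g \<in> S" using nz unfolding S_def by blast
    then have "degree g \<le> degree (Z mod g)" by (rule gmin)
    moreover have "degree (Z mod g) < degree g" using degree_mod_less'[OF gnz nz] .
    ultimately show False by simp
  qed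
  have "g dvd P" using gdvd[of 1 0] by simp
  then obtain h where h: "P = g * h" by (rule dvdE)
  have gT: "g dvd T" using gdvd[of 0 1] by simp
  have "is_unit g \<or> is_unit h" using irr h by (simp add: irreducible_def)
  moreover have "\<not> is_unit h"
  proof
    assume "is_unit h"
    then have "P dvd g" using h by (metis dvd_mult_unit_iff dvd_refl)
    then show False using gT nT dvd_trans by blast
  qed
  ultimately have "is_unit g" by blast
  then obtain c where c: "1 = g * c" by (rule dvdE)
  have c1: "1 = (x * P + y * T) * c" using xy c by simp
  have "T * (y * c) - 1 = P * (- x * c)" by (subst c1) (simp add: algebra_simps)
  then show ?thesis by (metis dvdI)
qed

context
  fixes \<sigma> :: "'a::field \<Rightarrow> 'a" and P1 P2 Q T :: "'a poly"
  assumes fa: "field_automorphism \<sigma>"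
    and pr2: "prime_elem P2"
    and inj: "\<And>A. P2 dvd phi \<sigma> Q A \<Longrightarrow> P1 dvd A"
    and surj: "\<And>C. \<exists>A. P2 dvd C - phi \<sigma> Q A"
    and T: "phi \<sigma> Q P1 = P2 * T" and nT: "\<not> P2 dvd T"
    and bez: "\<exists>V. P2 dvd T * V - 1"
begin

lemma inj_k: "P2^k dvd phi \<sigma> Q A \<Longrightarrow> P1^k dvd A"
proof (induction k arbitrary: A)
  case 0
  then show ?case by simp
next
  case (Suc k)
  have "P2 dvd P2^Suc k" by simp
  then have "P2 dvd phi \<sigma> Q A" using Suc.prems dvd_trans by blast
  then have "P1 dvd A" by (rule inj)
  then obtain A1 where A1: "A = P1 * A1" by (rule dvdE)
  have pnz: "P2 \<noteq> 0" using pr2 by auto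
  have "P2 * P2^k dvd P2 * (T * phi \<sigma> Q A1)"
    using Suc.prems A1 by (simp add: phi_mult[OF fa] T algebra_simps)
  then have "P2^k dvd T * phi \<sigma> Q A1" using pnz by simp
  then have "P2^k dvd phi \<sigma> Q A1" using pow_cancel[OF pr2 nT] by blast
  then have "P1^k dvd A1" by (rule Suc.IH)
  then show ?case using A1 by simp
qed

lemma surj_k: "\<exists>A. P2^k dvd C - phi \<sigma> Q A"
proof (induction k)
  case 0
  then show ?case by simp
next
  case (Suc k)
  then obtain A where "P2^k dvd C - phi \<sigma> Q A" by blast
  then obtain D where D: "C - phi \<sigma> Q A = P2^k * D" by (rule dvdE)
  obtain V where V: "P2 dvd T * V - 1" using bez by blast
  obtain B where B: "P2 dvd D * V^k - phi \<sigma> Q B" using surj by blast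
  define E where "E = P1^k * B"
  have phiE: "phi \<sigma> Q E = P2^k * (T^k * phi \<sigma> Q B)"
    unfolding E_def by (simp add: phi_mult[OF fa] phi_power[OF fa] T power_mult_distrib)
  have "C - phi \<sigma> Q (A + E) = P2^k * (D - T^k * phi \<sigma> Q B)"
    using D phiE by (simp add: phi_add[OF fa] algebra_simps)
  moreover have "P2 dvd D - T^k * phi \<sigma> Q B"
  proof -
    have "D - T^k * phi \<sigma> Q B = D * (1 - (T * V)^k) + T^k * (D * V^k - phi \<sigma> Q B)"
      by (simp add: algebra_simps power_mult_distrib)
    moreover have "P2 dvd 1 - (T * V)^k"
    proof -
      have "P2 dvd (T * V)^k - 1^k" using V by (rule dvd_pow_diff)
      then show ?thesis by (metis dvd_minus_iff minus_diff_eq power_one)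
    qed
    ultimately show ?thesis using B by simp
  qed
  ultimately have "P2^Suc k dvd C - phi \<sigma> Q (A + E)"
    by (simp add: mult_dvd_mono)
  then show ?case by blast
qed

end

lemma phi_one: "field_automorphism \<sigma> \<Longrightarrow> phi \<sigma> Q 1 = 1"
  using phi_power[of \<sigma> Q _ 0] by simp

lemma ring_poly_ring: "ring (poly_ring :: 'a::comm_ring_1 poly ring)"
  using cring_poly_ring by (rule cring.axioms(1))

lemma ring_quot: "ring (quot_poly (P :: 'a::comm_ring_1 poly))"
  unfolding quot_poly_def by (rule ideal.quotient_is_ring[OF ideal_PIdl_poly])

lemma PIdl_dvd: "PIdl\<^bsub>poly_ring\<^esub> (P::'a::comm_ring_1 poly) = {A. P dvd A}"
  unfolding PIdl_poly by (auto simp: dvd_def mult.commute)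

lemma iso_n:
  fixes \<sigma> :: "'a::field \<Rightarrow> 'a" and P1 P2 Q T :: "'a poly"
  assumes fa: "field_automorphism \<sigma>"
    and pr2: "prime_elem P2"
    and inj: "\<And>A. P2 dvd phi \<sigma> Q A \<Longrightarrow> P1 dvd A"
    and surj: "\<And>C. \<exists>A. P2 dvd C - phi \<sigma> Q A"
    and T: "phi \<sigma> Q P1 = P2 * T" and nT: "\<not> P2 dvd T"
    and bez: "\<exists>V. P2 dvd T * V - 1"
  shows "quot_poly (P1^n) \<simeq> quot_poly (P2^n)"
proof -
  define g where "g = (\<lambda>A. pclass (P2^n) (phi \<sigma> Q A))"
  have hom: "g \<in> ring_hom poly_ring (quot_poly (P2^n))"
    by (rule ring_hom_memI)
       (auto simp: g_def quot_carrier quot_add quot_mult quot_one phi_add[OF fa] phi_mult[OF fa] phi_one[OF fa])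
  then have hr: "ring_hom_ring poly_ring (quot_poly (P2^n)) g"
    by (intro ring_hom_ringI2 ring_poly_ring ring_quot)
  have sj: "g ` carrier poly_ring = carrier (quot_poly (P2^n))"
  proof
    show "g ` carrier poly_ring \<subseteq> carrier (quot_poly (P2^n))"
      by (auto simp: g_def quot_carrier)
    show "carrier (quot_poly (P2^n)) \<subseteq> g ` carrier poly_ring"
    proof
      fix S assume "S \<in> carrier (quot_poly (P2^n))"
      then obtain C where C: "S = pclass (P2^n) C" by (auto simp: quot_carrier)
      obtain A where "P2^n dvd C - phi \<sigma> Q A"
        using surj_k[OF fa pr2 inj surj T nT bez] by blast
      then have "S = g A" unfolding C g_def by (simp add: pclass_eq_iff)
      then show "S \<in> g ` carrier poly_ring" by simp
    qed
  qed
  have ker: "a_kernel poly_ring (quot_poly (P2^n)) g = PIdl\<^bsub>poly_ring\<^esub> (P1^n)"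
  proof -
    have "g A = \<zero>\<^bsub>quot_poly (P2^n)\<^esub> \<longleftrightarrow> P1^n dvd A" for A
    proof -
      have "g A = \<zero>\<^bsub>quot_poly (P2^n)\<^esub> \<longleftrightarrow> P2^n dvd phi \<sigma> Q A"
        by (simp add: g_def quot_zero pclass_eq_iff)
      also have "\<dots> \<longleftrightarrow> P1^n dvd A"
      proof
        assume "P2^n dvd phi \<sigma> Q A"
        then show "P1^n dvd A" using inj_k[OF fa pr2 inj surj T nT bez] by blast
      next
        assume "P1^n dvd A"
        then obtain B where "A = P1^n * B" by (rule dvdE)
        then have "phi \<sigma> Q A = P2^n * (T^n * phi \<sigma> Q B)"
          by (simp add: phi_mult[OF fa] phi_power[OF fa] T power_mult_distrib)
        then show "P2^n dvd phi \<sigma> Q A" by simp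
      qed
      finally show ?thesis .
    qed
    then show ?thesis unfolding a_kernel_def' PIdl_dvd by auto
  qed
  have "poly_ring Quot (a_kernel poly_ring (quot_poly (P2^n)) g) \<simeq> quot_poly (P2^n)"
    using ring_hom_ring.FactRing_iso[OF hr sj] .
  then have "poly_ring Quot (PIdl\<^bsub>poly_ring\<^esub> (P1^n)) \<simeq> quot_poly (P2^n)"
    by (simp only: ker)
  moreover have "quot_poly (P1^n) = poly_ring Quot (PIdl\<^bsub>poly_ring\<^esub> (P1^n))"
    by (simp add: quot_poly_def)
  ultimately show ?thesis by simp
qed

theorem mainTheorem14:
  fixes P1 P2 :: "'a::field poly"
    and f :: "'a poly set \<Rightarrow> 'a poly set"
  assumes "irreducible P1" and "irreducible P2"
    and "f \<in> ring_iso (quot_poly P1) (quot_poly P2)"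
    and "stabilizes_K P1 P2 f"
    and "pderiv (Q_f P1 P2 f) \<noteq> 0"
  shows "\<forall>n::nat. n \<ge> 1 \<longrightarrow> quot_poly (P1 ^ n) \<simeq> quot_poly (P2 ^ n)"
proof -
  note irr1 = assms(1) and irr2 = assms(2)
  let ?X = "[:0,1:] :: 'a poly"
  obtain \<sigma> where fa: "field_automorphism \<sigma>"
    and stab: "\<And>a. f (pclass P1 [:a:]) = pclass P2 [:\<sigma> a:]"
    using assms(4) unfolding stabilizes_K_def by blast
  have hom: "f \<in> ring_hom (quot_poly P1) (quot_poly P2)"
    and bij: "bij_betw f (carrier (quot_poly P1)) (carrier (quot_poly P2))"
    using assms(3) unfolding ring_iso_def by auto
  have img: "f ` range (pclass P1) = range (pclass P2)"
    using bij unfolding bij_betw_def quot_carrier by simp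
  have injf: "inj_on f (range (pclass P1))"
    using bij unfolding bij_betw_def quot_carrier by simp
  have P2nz: "P2 \<noteq> 0" using irr2 by auto
  have deg2: "degree P2 \<noteq> 0"
  proof
    assume "degree P2 = 0"
    then have "is_unit P2" using P2nz is_unit_iff_degree by blast
    then show False using irr2 by (simp add: irreducible_def)
  qed
  define Q where "Q = Q_f P1 P2 f"
  have Qex: "\<exists>!Q. degree Q < degree P2 \<and> f (pclass P1 ?X) = pclass P2 Q"
  proof -
    have "f (pclass P1 ?X) \<in> range (pclass P2)" using img by blast
    then obtain C where C: "f (pclass P1 ?X) = pclass P2 C" by blast
    define Q0 where "Q0 = C mod P2"
    have "pclass P2 Q0 = pclass P2 C"
    proof -
      have "C mod P2 - C = P2 * (- (C div P2))"
        using minus_div_mult_eq_mod[of C P2] by (simp add: algebra_simps)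
      then show ?thesis unfolding pclass_eq_iff Q0_def by (rule dvdI)
    qed
    moreover have "degree Q0 < degree P2"
      using degree_mod_less[OF P2nz, of C] deg2 unfolding Q0_def by auto
    ultimately have ex: "degree Q0 < degree P2 \<and> f (pclass P1 ?X) = pclass P2 Q0" using C by simp
    have un: "Q' = Q0" if "degree Q' < degree P2 \<and> f (pclass P1 ?X) = pclass P2 Q'" for Q'
    proof (rule ccontr)
      assume ne: "Q' \<noteq> Q0"
      have "P2 dvd Q' - Q0" using that ex by (simp add: pclass_eq_iff[symmetric])
      then have "degree P2 \<le> degree (Q' - Q0)" using ne by (intro dvd_imp_degree_le) auto
      moreover have "degree (Q' - Q0) \<le> max (degree Q') (degree Q0)" by (rule degree_diff_le_max)
      ultimately show False using that ex by linarith
    qed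
    show ?thesis using ex un by blast
  qed
  have Qprop: "degree Q < degree P2 \<and> f (pclass P1 ?X) = pclass P2 Q"
    unfolding Q_def Q_f_def using theI'[OF Qex] .
  have carr1: "pclass P1 A \<in> carrier (quot_poly P1)" for A by (simp add: quot_carrier)
  have K1: "f (pclass P1 A) = pclass P2 (phi \<sigma> Q A)" for A
  proof (induction A)
    case 0
    have "f (pclass P1 0) = f (pclass P1 [:0:])" by simp
    also have "\<dots> = pclass P2 [:\<sigma> 0:]" by (rule stab)
    finally show ?case by (simp add: s_zero[OF fa] phi_def)
  next
    case (pCons a A)
    have e: "pCons a A = [:a:] + ?X * A" by simp
    have m: "f (pclass P1 (?X * A)) = f (pclass P1 ?X) \<otimes>\<^bsub>quot_poly P2\<^esub> f (pclass P1 A)"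
      using ring_hom_mult[OF hom carr1 carr1, of ?X A] by (simp add: quot_mult)
    have "f (pclass P1 (pCons a A)) = f (pclass P1 ([:a:] + ?X * A))" by (subst e) (rule refl)
    also have "\<dots> = f (pclass P1 [:a:]) \<oplus>\<^bsub>quot_poly P2\<^esub> f (pclass P1 (?X * A))"
      using ring_hom_add[OF hom carr1 carr1, of "[:a:]" "?X * A"] by (simp add: quot_add)
    also have "\<dots> = f (pclass P1 [:a:]) \<oplus>\<^bsub>quot_poly P2\<^esub> (f (pclass P1 ?X) \<otimes>\<^bsub>quot_poly P2\<^esub> f (pclass P1 A))"
      by (simp only: m)
    also have "\<dots> = pclass P2 ([:\<sigma> a:] + Q * phi \<sigma> Q A)"
      using Qprop pCons.IH stab by (simp add: quot_add quot_mult)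
    also have "[:\<sigma> a:] + Q * phi \<sigma> Q A = phi \<sigma> Q (pCons a A)"
      unfolding arg_cong[OF e, of "phi \<sigma> Q"]
      by (simp only: phi_add[OF fa] phi_mult[OF fa] phi_const[OF fa] phi_X[OF fa])
    finally show ?case .
  qed
  have phi0: "phi \<sigma> Q 0 = 0" by (simp add: phi_def)
  have inj: "P1 dvd A" if "P2 dvd phi \<sigma> Q A" for A
  proof -
    have "f (pclass P1 A) = f (pclass P1 0)" using that by (simp add: K1 phi0 pclass_eq_iff)
    then have "pclass P1 A = pclass P1 0" using injf by (auto dest: inj_onD)
    then show ?thesis by (simp add: pclass_eq_iff)
  qed
  have surj: "\<exists>A. P2 dvd C - phi \<sigma> Q A" for C
  proof -
    have "pclass P2 C \<in> f ` range (pclass P1)" using img by blast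
    then obtain A where "pclass P2 C = f (pclass P1 A)" by blast
    then have "pclass P2 C = pclass P2 (phi \<sigma> Q A)" by (simp add: K1)
    then show ?thesis by (auto simp: pclass_eq_iff)
  qed
  have "pclass P1 P1 = pclass P1 0" by (simp add: pclass_eq_iff)
  then have "pclass P2 (phi \<sigma> Q P1) = pclass P2 0" using K1[of P1] K1[of 0] phi0 by simp
  then have "P2 dvd phi \<sigma> Q P1" by (simp add: pclass_eq_iff)
  then obtain T where T: "phi \<sigma> Q P1 = P2 * T" by (rule dvdE)
  have dQ: "\<not> P2 dvd pderiv Q"
  proof
    assume "P2 dvd pderiv Q"
    then have "degree P2 \<le> degree (pderiv Q)" using assms(5) unfolding Q_def
      by (intro dvd_imp_degree_le) auto
    moreover have "degree (pderiv Q) \<le> degree Q"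
      by (rule degree_le) (auto simp: coeff_pderiv coeff_eq_0)
    ultimately show False using Qprop by linarith
  qed
  have nT: "\<not> P2 dvd T"
  proof
    assume "P2 dvd T"
    then have "P2^2 dvd phi \<sigma> Q P1" unfolding T by (simp add: power2_eq_square)
    then show False using core[OF fa irr1 irr2 inj surj dQ] by blast
  qed
  have pr2: "prime_elem P2" using irr2 by (rule field_poly_irreducible_imp_prime)
  have bez: "\<exists>V. P2 dvd T * V - 1" using bezout_field_poly[OF irr2 nT] .
  show ?thesis using iso_n[OF fa pr2 inj surj T nT bez] by blast
qed

end
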